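(* Let $p$ be a prime, $c\ge1$, $G$ a finite $p$-group, $B$ a cyclic subgroup of $Z(G)$ of order $p^k$, and suppose $A=G/B$ is generated by $d$ elements. Let $G\cong F/R$ with $F$ free, and let $S$ be the normal subgroup of $F$ containing $R$ with $B=S/R$ (so $A\cong F/S$). Then $$\left|\,[S,{}_cF]/[R,{}_cF]\,\right|\le p^{dk(d+1)^{c-1}}.$$
   Context: For subgroups $U,V$ of a group, $[U,{}_0V]=U$ and $[U,{}_{i+1}V]=[[U,{}_iV],V]$. *)

theory Defs
  imports "HOL-Algebra.Algebra"
begin

definition center :: "('a, 'b) monoid_scheme \<Rightarrow> 'a set" where
  "center G = {z \<in> carrier G. \<forall>g \<in> carrier G. z \<otimes>\<^bsub>G\<^esub> g = g \<otimes>\<^bsub>G\<^esub> z}"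

definition comm_subgroup :: "('a, 'b) monoid_scheme \<Rightarrow> 'a set \<Rightarrow> 'a set \<Rightarrow> 'a set" where
  "comm_subgroup G U V = generate G
     {inv\<^bsub>G\<^esub> x \<otimes>\<^bsub>G\<^esub> inv\<^bsub>G\<^esub> y \<otimes>\<^bsub>G\<^esub> x \<otimes>\<^bsub>G\<^esub> y | x y. x \<in> U \<and> y \<in> V}"

fun iter_comm :: "('a, 'b) monoid_scheme \<Rightarrow> 'a set \<Rightarrow> nat \<Rightarrow> 'a set \<Rightarrow> 'a set" where
  "iter_comm G U 0 V = U"
| "iter_comm G U (Suc i) V = comm_subgroup G (iter_comm G U i V) V"

text \<open>Words over X and their inverses: (True, x) stands for x, (False, x) for x^-1.\<close>
definition word_eval :: "('a, 'b) monoid_scheme \<Rightarrow> (bool \<times> 'a) list \<Rightarrow> 'a" where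
  "word_eval G w = foldr (\<lambda>(b, x) acc. (if b then x else inv\<^bsub>G\<^esub> x) \<otimes>\<^bsub>G\<^esub> acc) w \<one>\<^bsub>G\<^esub>"

definition reduced_word :: "(bool \<times> 'a) list \<Rightarrow> bool" where
  "reduced_word w = (\<forall>i. Suc i < length w \<longrightarrow>
      \<not> (snd (w ! i) = snd (w ! Suc i) \<and> fst (w ! i) \<noteq> fst (w ! Suc i)))"

definition free_group_on :: "('a, 'b) monoid_scheme \<Rightarrow> 'a set \<Rightarrow> bool" where
  "free_group_on F Y \<longleftrightarrow> group F \<and> Y \<subseteq> carrier F \<and> generate F Y = carrier F \<and>
     (\<forall>w. length w > 0 \<and> set (map snd w) \<subseteq> Y \<and> reduced_word w \<longrightarrow> word_eval F w \<noteq> one F)"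

definition free_group :: "('a, 'b) monoid_scheme \<Rightarrow> bool" where
  "free_group F \<longleftrightarrow> (\<exists>Y. free_group_on F Y)"

end

theory Submission
  imports Defs
begin


definition cmt :: "('a, 'b) monoid_scheme \<Rightarrow> 'a \<Rightarrow> 'a \<Rightarrow> 'a" where
  "cmt G x y = inv\<^bsub>G\<^esub> x \<otimes>\<^bsub>G\<^esub> inv\<^bsub>G\<^esub> y \<otimes>\<^bsub>G\<^esub> x \<otimes>\<^bsub>G\<^esub> y"

lemma comm_subgroup_alt: "comm_subgroup G U V = generate G {cmt G x y | x y. x \<in> U \<and> y \<in> V}"
  unfolding comm_subgroup_def cmt_def by simp

context group
begin

lemma canc1: "x \<in> carrier G \<Longrightarrow> y \<in> carrier G \<Longrightarrow> x \<otimes> (inv x \<otimes> y) = y"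
  by (simp add: m_assoc[symmetric])
lemma canc2: "x \<in> carrier G \<Longrightarrow> y \<in> carrier G \<Longrightarrow> inv x \<otimes> (x \<otimes> y) = y"
  by (simp add: m_assoc[symmetric])

lemmas gsimps = m_assoc inv_mult_group inv_inv canc1 canc2

lemma cmt_closed[simp]: "x \<in> carrier G \<Longrightarrow> y \<in> carrier G \<Longrightarrow> cmt G x y \<in> carrier G"
  by (simp add: cmt_def)

lemma cmt_one_iff: "a \<in> carrier G \<Longrightarrow> b \<in> carrier G \<Longrightarrow> (cmt G a b = \<one>) = (a \<otimes> b = b \<otimes> a)"
proof -
  assume [simp]: "a \<in> carrier G" "b \<in> carrier G"
  have "cmt G a b = inv (b \<otimes> a) \<otimes> (a \<otimes> b)" by (simp add: cmt_def gsimps)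
  then show ?thesis by (simp add: inv_solve_left')
qed

lemma cmt_inv: "a \<in> carrier G \<Longrightarrow> b \<in> carrier G \<Longrightarrow> inv (cmt G a b) = cmt G b a"
  unfolding cmt_def by (simp add: gsimps)

lemma hall_witt:
  assumes [simp]: "x \<in> carrier G" "y \<in> carrier G" "z \<in> carrier G"
  shows "(inv y \<otimes> cmt G (cmt G x (inv y)) z \<otimes> y) \<otimes> (inv z \<otimes> cmt G (cmt G y (inv z)) x \<otimes> z)
     \<otimes> (inv x \<otimes> cmt G (cmt G z (inv x)) y \<otimes> x) = \<one>"
  unfolding cmt_def by (simp add: gsimps)

lemma comm_subgroup_subgroup:
  "U \<subseteq> carrier G \<Longrightarrow> V \<subseteq> carrier G \<Longrightarrow> subgroup (comm_subgroup G U V) G"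
  unfolding comm_subgroup_alt by (rule generate_is_subgroup) (force intro: cmt_closed)

lemma comm_in: "x \<in> U \<Longrightarrow> y \<in> V \<Longrightarrow> cmt G x y \<in> comm_subgroup G U V"
  unfolding comm_subgroup_alt by (rule generate.incl) auto

lemma comm_subgroup_le:
  assumes "subgroup N G" "\<And>x y. x \<in> U \<Longrightarrow> y \<in> V \<Longrightarrow> cmt G x y \<in> N"
  shows "comm_subgroup G U V \<subseteq> N"
  unfolding comm_subgroup_alt using assms by (intro generate_subgroup_incl) auto

lemma comm_mono: "U \<subseteq> U' \<Longrightarrow> V \<subseteq> V' \<Longrightarrow> comm_subgroup G U V \<subseteq> comm_subgroup G U' V'"
  unfolding comm_subgroup_alt by (rule mono_generate) blast

lemma comm_sym_le:
  assumes "U \<subseteq> carrier G" "V \<subseteq> carrier G"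
  shows "comm_subgroup G U V \<subseteq> comm_subgroup G V U"
proof (rule comm_subgroup_le)
  show "subgroup (comm_subgroup G V U) G" by (rule comm_subgroup_subgroup[OF assms(2,1)])
  fix x y assume "x \<in> U" "y \<in> V"
  then have "cmt G x y = inv (cmt G y x)" using assms by (subst cmt_inv) auto
  moreover have "cmt G y x \<in> comm_subgroup G V U" using \<open>x \<in> U\<close> \<open>y \<in> V\<close> by (rule comm_in[rotated])
  ultimately show "cmt G x y \<in> comm_subgroup G V U"
    using subgroup.m_inv_closed[OF comm_subgroup_subgroup[OF assms(2,1)]] by simp
qed

lemma comm_sym:
  "U \<subseteq> carrier G \<Longrightarrow> V \<subseteq> carrier G \<Longrightarrow> comm_subgroup G U V = comm_subgroup G V U"
  by (simp add: comm_sym_le equalityI)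

lemma normal_generateI':
  assumes "H \<subseteq> carrier G" and "\<And>h g. \<lbrakk> h \<in> H; g \<in> carrier G \<rbrakk> \<Longrightarrow> g \<otimes> h \<otimes> (inv g) \<in> generate G H"
  shows "generate G H \<lhd> G"
proof (rule normal_invI[OF generate_is_subgroup[OF assms(1)]])
  fix g h assume g: "g \<in> carrier G" show "h \<in> generate G H \<Longrightarrow> g \<otimes> h \<otimes> (inv g) \<in> generate G H"
  proof (induct h rule: generate.induct)
    case one thus ?case
      using g generate.one by auto
  next
    case incl show ?case
      using assms(2)[OF incl g] .
  next
    case (inv h)
    hence h: "h \<in> carrier G"
      using assms(1) by auto
    hence "inv (g \<otimes> h \<otimes> (inv g)) = g \<otimes> (inv h) \<otimes> (inv g)"
      using g by (simp add: inv_mult_group m_assoc)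
    thus ?case
      using generate_m_inv_closed[OF assms(1) assms(2)[OF inv g]] by simp
  next
    case (eng h1 h2)
    note in_carrier = eng(1,3)[THEN generate_in_carrier[OF assms(1)]]
    have "g \<otimes> (h1 \<otimes> h2) \<otimes> inv g = (g \<otimes> h1 \<otimes> inv g) \<otimes> (g \<otimes> h2 \<otimes> inv g)"
      using in_carrier g by (simp add: inv_solve_left m_assoc)
    thus ?case
      using generate.eng[OF eng(2,4)] by simp
  qed
qed

lemma comm_normal:
  assumes U: "U \<subseteq> carrier G"
  shows "comm_subgroup G U (carrier G) \<lhd> G"
  unfolding comm_subgroup_alt
proof (rule normal_generateI')
  show "{cmt G x y |x y. x \<in> U \<and> y \<in> carrier G} \<subseteq> carrier G" using U by auto
  fix c g assume c: "c \<in> {cmt G x y |x y. x \<in> U \<and> y \<in> carrier G}" and g: "g \<in> carrier G"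
  then obtain x f where xf: "x \<in> U" "f \<in> carrier G" "c = cmt G x f" by auto
  have x: "x \<in> carrier G" using xf U by auto
  have eq: "g \<otimes> c \<otimes> inv g = inv (cmt G x (inv g)) \<otimes> cmt G x (f \<otimes> inv g)"
    using x xf g unfolding cmt_def by (simp add: gsimps)
  let ?H = "generate G {cmt G x y |x y. x \<in> U \<and> y \<in> carrier G}"
  have sg: "subgroup ?H G" by (rule generate_is_subgroup) (use U in auto)
  have "cmt G x (inv g) \<in> ?H" "cmt G x (f \<otimes> inv g) \<in> ?H"
    using xf g by (auto intro!: generate.incl)
  then show "g \<otimes> c \<otimes> inv g \<in> ?H" unfolding eq
    using sg by (simp add: subgroup.m_closed subgroup.m_inv_closed)
qed

end



lemma card_factor:
  assumes "finite (pp ` XX)" "\<And>a b. a \<in> XX \<Longrightarrow> b \<in> XX \<Longrightarrow> pp a = pp b \<Longrightarrow> ff a = ff b"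
  shows "finite (ff ` XX) \<and> card (ff ` XX) \<le> card (pp ` XX)"
proof -
  have "ff ` XX = (\<lambda>z. ff (inv_into XX pp z)) ` (pp ` XX)"
  proof (rule subset_antisym)
    show "ff ` XX \<subseteq> (\<lambda>z. ff (inv_into XX pp z)) ` (pp ` XX)"
    proof
      fix w assume "w \<in> ff ` XX"
      then obtain a where a: "a \<in> XX" "w = ff a" by auto
      have "inv_into XX pp (pp a) \<in> XX" "pp (inv_into XX pp (pp a)) = pp a"
        using a by (auto intro: inv_into_into f_inv_into_f)
      then have "ff (inv_into XX pp (pp a)) = ff a" using assms(2) a by blast
      then show "w \<in> (\<lambda>z. ff (inv_into XX pp z)) ` (pp ` XX)" using a by force
    qed
    show "(\<lambda>z. ff (inv_into XX pp z)) ` (pp ` XX) \<subseteq> ff ` XX"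
      by (auto intro: inv_into_into)
  qed
  then show ?thesis using assms(1) by (simp add: card_image_le)
qed

lemma (in group_hom) hom_cmt:
  "x \<in> carrier G \<Longrightarrow> y \<in> carrier G \<Longrightarrow> h (cmt G x y) = cmt H (h x) (h y)"
  unfolding cmt_def by (simp add: hom_mult hom_inv)

lemma (in normal) coset_is_one_iff:
  "w \<in> carrier G \<Longrightarrow> (H #> w = H) = (w \<in> H)"
proof
  assume w: "w \<in> carrier G" and e: "H #> w = H"
  show "w \<in> H" using rcos_self[OF w subgroup_axioms] e by simp
next
  assume "w \<in> carrier G" "w \<in> H"
  then show "H #> w = H" using coset_join2 subgroup_axioms by blast
qed

context group
begin

lemma swap_mid:
  assumes [simp]: "a \<in> carrier G" "b \<in> carrier G" "c \<in> carrier G" "d \<in> carrier G"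
    and bc: "b \<otimes> c = c \<otimes> b"
  shows "(a \<otimes> b) \<otimes> (c \<otimes> d) = (a \<otimes> c) \<otimes> (b \<otimes> d)"
proof -
  have "(a \<otimes> b) \<otimes> (c \<otimes> d) = a \<otimes> ((b \<otimes> c) \<otimes> d)" by (simp add: m_assoc)
  also have "\<dots> = a \<otimes> ((c \<otimes> b) \<otimes> d)" by (simp add: bc)
  finally show ?thesis by (simp add: m_assoc)
qed

lemma normal_conj1: "N \<lhd> G \<Longrightarrow> n \<in> N \<Longrightarrow> g \<in> carrier G \<Longrightarrow> g \<otimes> n \<otimes> inv g \<in> N"
  by (simp add: normal_inv_iff)

lemma normal_conj2: "N \<lhd> G \<Longrightarrow> n \<in> N \<Longrightarrow> g \<in> carrier G \<Longrightarrow> inv g \<otimes> n \<otimes> g \<in> N"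
  using normal_conj1[of N n "inv g"] by simp

lemma three_subgroup:
  assumes XX: "subgroup XX G" and Y: "subgroup Y G" and Z: "subgroup Z G" and N: "N \<lhd> G"
    and h1: "comm_subgroup G (comm_subgroup G Y Z) XX \<subseteq> N"
    and h2: "comm_subgroup G (comm_subgroup G Z XX) Y \<subseteq> N"
  shows "comm_subgroup G (comm_subgroup G XX Y) Z \<subseteq> N"
proof -
  have Xc: "XX \<subseteq> carrier G" and Yc: "Y \<subseteq> carrier G" and Zc: "Z \<subseteq> carrier G"
    using XX Y Z subgroup.subset by auto
  have Ns: "subgroup N G" using N normal_imp_subgroup by blast
  define C where "C = {w \<in> carrier G. \<forall>z\<in>Z. cmt G w z \<in> N}"
  have Csub: "subgroup C G"
  proof (rule subgroupI)
    show "C \<subseteq> carrier G" unfolding C_def by auto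
    show "C \<noteq> {}"
    proof -
      have "\<one> \<in> C" unfolding C_def using Zc subgroup.one_closed[OF Ns]
        by (auto simp: cmt_def)
      then show ?thesis by auto
    qed
  next
    fix a assume a: "a \<in> C"
    show "inv a \<in> C" unfolding C_def
    proof (intro CollectI conjI ballI)
      show "inv a \<in> carrier G" using a C_def by auto
      fix z assume z: "z \<in> Z"
      have ac: "a \<in> carrier G" and zc: "z \<in> carrier G" using a z Zc C_def by auto
      have "cmt G (inv a) z = inv (inv a) \<otimes> inv (cmt G a z) \<otimes> inv a"
        using ac zc unfolding cmt_def by (simp add: gsimps)
      moreover have "inv (cmt G a z) \<in> N" using a z C_def subgroup.m_inv_closed[OF Ns] by auto
      ultimately show "cmt G (inv a) z \<in> N" using normal_conj2[OF N, of _ "inv a"] ac by simp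
    qed
  next
    fix a b assume a: "a \<in> C" and b: "b \<in> C"
    show "a \<otimes> b \<in> C" unfolding C_def
    proof (intro CollectI conjI ballI)
      have ac: "a \<in> carrier G" and bc: "b \<in> carrier G" using a b C_def by auto
      show "a \<otimes> b \<in> carrier G" using ac bc by simp
      fix z assume z: "z \<in> Z"
      have zc: "z \<in> carrier G" using z Zc by auto
      have "cmt G (a \<otimes> b) z = (inv b \<otimes> cmt G a z \<otimes> b) \<otimes> cmt G b z"
        using ac bc zc unfolding cmt_def by (simp add: gsimps)
      moreover have "inv b \<otimes> cmt G a z \<otimes> b \<in> N" using a z C_def normal_conj2[OF N] bc by auto
      moreover have "cmt G b z \<in> N" using b z C_def by auto
      ultimately show "cmt G (a \<otimes> b) z \<in> N" using subgroup.m_closed[OF Ns] by simp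
    qed
  qed
  have "comm_subgroup G XX Y \<subseteq> C"
  proof (rule comm_subgroup_le[OF Csub])
    fix x y assume x: "x \<in> XX" and y: "y \<in> Y"
    have xc: "x \<in> carrier G" and yc: "y \<in> carrier G" using x y Xc Yc by auto
    show "cmt G x y \<in> C" unfolding C_def
    proof (intro CollectI conjI ballI)
      show "cmt G x y \<in> carrier G" using xc yc by simp
      fix z assume z: "z \<in> Z"
      have zc: "z \<in> carrier G" using z Zc by auto
      have iy: "inv y \<in> Y" "inv z \<in> Z" "inv x \<in> XX"
        using x y z XX Y Z by (simp_all add: subgroup.m_inv_closed)
      have hw: "(y \<otimes> cmt G (cmt G x y) z \<otimes> inv y) \<otimes> (inv z \<otimes> cmt G (cmt G (inv y) (inv z)) x \<otimes> z)
         \<otimes> (inv x \<otimes> cmt G (cmt G z (inv x)) (inv y) \<otimes> x) = \<one>"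
        using hall_witt[OF xc inv_closed[OF yc] zc] unfolding inv_inv[OF yc] .
      let ?A = "y \<otimes> cmt G (cmt G x y) z \<otimes> inv y"
      let ?B = "inv z \<otimes> cmt G (cmt G (inv y) (inv z)) x \<otimes> z"
      let ?C = "inv x \<otimes> cmt G (cmt G z (inv x)) (inv y) \<otimes> x"
      have "cmt G (cmt G (inv y) (inv z)) x \<in> N"
        using h1 comm_in[OF comm_in[OF iy(1,2)] x] by auto
      then have B: "?B \<in> N" using normal_conj2[OF N] zc by auto
      have "cmt G (cmt G z (inv x)) (inv y) \<in> N"
        using h2 comm_in[OF comm_in[OF z iy(3)] iy(1)] by auto
      then have C: "?C \<in> N" using normal_conj2[OF N] xc by auto
      have Ac: "?A \<in> carrier G" using xc yc zc by simp
      have BCc: "?B \<otimes> ?C \<in> carrier G" using xc yc zc by simp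
      have "?A \<otimes> (?B \<otimes> ?C) = \<one>" using hw xc yc zc by (simp add: m_assoc)
      then have "?A = inv (?B \<otimes> ?C)" using inv_equality[OF _ BCc Ac] by simp
      then have A: "?A \<in> N" using B C subgroup.m_closed[OF Ns] subgroup.m_inv_closed[OF Ns] by simp
      have "cmt G (cmt G x y) z = inv y \<otimes> ?A \<otimes> y" using xc yc zc by (simp add: gsimps)
      then show "cmt G (cmt G x y) z \<in> N" using normal_conj2[OF N A yc] by simp
    qed
  qed
  then have "\<And>w z. w \<in> comm_subgroup G XX Y \<Longrightarrow> z \<in> Z \<Longrightarrow> cmt G w z \<in> N"
    unfolding C_def by blast
  then show ?thesis
    by (intro comm_subgroup_le[OF Ns])
qed

end


fun cprod :: "('a, 'b) monoid_scheme \<Rightarrow> (nat \<Rightarrow> 'a) \<Rightarrow> (nat \<Rightarrow> 'a) \<Rightarrow> nat \<Rightarrow> 'a" where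
  "cprod G ts gs 0 = \<one>\<^bsub>G\<^esub>"
| "cprod G ts gs (Suc j) = cprod G ts gs j \<otimes>\<^bsub>G\<^esub> cmt G (ts j) (gs j)"

context group
begin

lemma cprod_closed:
  "(\<And>i. i < j \<Longrightarrow> ts i \<in> carrier G \<and> gs i \<in> carrier G) \<Longrightarrow> cprod G ts gs j \<in> carrier G"
  by (induction j) auto

lemma cprod_cong:
  "(\<And>i. i < j \<Longrightarrow> ts i = ss i) \<Longrightarrow> cprod G ts gs j = cprod G ss gs j"
  by (induction j) auto

lemma cprod_one:
  "(\<And>i. i < j \<Longrightarrow> gs i \<in> carrier G) \<Longrightarrow> cprod G (\<lambda>_. \<one>) gs j = \<one>"
  by (induction j) (auto simp: cmt_def)

lemma cprod_in:
  "subgroup U G \<Longrightarrow> (\<And>i. i < j \<Longrightarrow> cmt G (ts i) (gs i) \<in> U) \<Longrightarrow> cprod G ts gs j \<in> U"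
  by (induction j) (auto simp: subgroup.one_closed subgroup.m_closed)

lemma count_lemma:
  fixes T U K :: "'a set" and gs :: "nat \<Rightarrow> 'a" and e :: nat
  assumes T: "subgroup T G" and U: "subgroup U G" and UT: "U \<subseteq> T"
    and TU: "comm_subgroup G T (carrier G) \<subseteq> U"
    and K: "K \<subseteq> carrier G"
    and TK: "\<And>t k. t \<in> T \<Longrightarrow> k \<in> K \<Longrightarrow> cmt G t k \<in> comm_subgroup G U (carrier G)"
    and gs: "\<And>i. i < e \<Longrightarrow> gs i \<in> carrier G"
    and gen: "generate G (K \<union> gs ` {..<e}) = carrier G"
    and fin: "finite ((\<lambda>t. U #> t) ` T)"
  shows "finite ((\<lambda>w. comm_subgroup G U (carrier G) #> w) ` comm_subgroup G T (carrier G))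
    \<and> card ((\<lambda>w. comm_subgroup G U (carrier G) #> w) ` comm_subgroup G T (carrier G))
       \<le> card ((\<lambda>t. U #> t) ` T) ^ e"
proof -
  have Tc: "T \<subseteq> carrier G" and Uc: "U \<subseteq> carrier G" using T U subgroup.subset by auto
  define N where "N = comm_subgroup G U (carrier G)"
  have nN: "N \<lhd> G" unfolding N_def by (rule comm_normal[OF Uc])
  define Q where "Q = G Mod N"
  define q where "q = (\<lambda>x. N #> x)"
  interpret Q: group Q unfolding Q_def by (rule normal.factorgroup_is_group[OF nN])
  interpret qh: group_hom G Q q
    unfolding Q_def q_def group_hom_def group_hom_axioms_def
    using normal.r_coset_hom_Mod[OF nN] normal.factorgroup_is_group[OF nN] is_group by blast
  have qc: "\<And>x. x \<in> carrier G \<Longrightarrow> q x \<in> carrier Q" by simp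
  have qN: "\<And>w. w \<in> N \<Longrightarrow> q w = \<one>\<^bsub>Q\<^esub>"
  proof -
    fix w assume w: "w \<in> N"
    have "w \<in> carrier G" using w nN normal_imp_subgroup subgroup.subset by blast
    then show "q w = \<one>\<^bsub>Q\<^esub>" unfolding q_def Q_def using normal.coset_is_one_iff[OF nN] w by simp
  qed
  have cU: "\<And>t x. t \<in> T \<Longrightarrow> x \<in> carrier G \<Longrightarrow> cmt G t x \<in> U"
    using TU comm_in by blast
  have cen: "\<And>u x. u \<in> U \<Longrightarrow> x \<in> carrier G \<Longrightarrow> q u \<otimes>\<^bsub>Q\<^esub> q x = q x \<otimes>\<^bsub>Q\<^esub> q u"
  proof -
    fix u x assume u: "u \<in> U" and x: "x \<in> carrier G"
    have uc: "u \<in> carrier G" using u Uc by auto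
    have "cmt G u x \<in> N" unfolding N_def using u x by (rule comm_in)
    then have "q (cmt G u x) = \<one>\<^bsub>Q\<^esub>" by (rule qN)
    then have "cmt Q (q u) (q x) = \<one>\<^bsub>Q\<^esub>" using qh.hom_cmt uc x by simp
    then show "q u \<otimes>\<^bsub>Q\<^esub> q x = q x \<otimes>\<^bsub>Q\<^esub> q u" using Q.cmt_one_iff uc x by simp
  qed
  have conj: "\<And>c y. c \<in> U \<Longrightarrow> y \<in> carrier G \<Longrightarrow> q (inv y \<otimes> c \<otimes> y) = q c"
  proof -
    fix c y assume c: "c \<in> U" and y: "y \<in> carrier G"
    have cc: "c \<in> carrier G" using c Uc by auto
    have "q (inv y \<otimes> c \<otimes> y) = inv\<^bsub>Q\<^esub> (q y) \<otimes>\<^bsub>Q\<^esub> (q c \<otimes>\<^bsub>Q\<^esub> q y)"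
      using cc y by (simp add: Q.m_assoc)
    also have "\<dots> = inv\<^bsub>Q\<^esub> (q y) \<otimes>\<^bsub>Q\<^esub> (q y \<otimes>\<^bsub>Q\<^esub> q c)" using cen[OF c y] by simp
    also have "\<dots> = q c" using cc y by (simp add: Q.m_assoc[symmetric])
    finally show "q (inv y \<otimes> c \<otimes> y) = q c" .
  qed
  have s3: "\<And>x y a. x \<in> T \<Longrightarrow> y \<in> T \<Longrightarrow> a \<in> carrier G \<Longrightarrow>
      q (cmt G (x \<otimes> y) a) = q (cmt G x a) \<otimes>\<^bsub>Q\<^esub> q (cmt G y a)"
  proof -
    fix x y a assume x: "x \<in> T" and y: "y \<in> T" and a: "a \<in> carrier G"
    have xc: "x \<in> carrier G" and yc: "y \<in> carrier G" using x y Tc by auto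
    have "cmt G (x \<otimes> y) a = (inv y \<otimes> cmt G x a \<otimes> y) \<otimes> cmt G y a"
      using xc yc a unfolding cmt_def by (simp add: gsimps)
    then have "q (cmt G (x \<otimes> y) a) = q (inv y \<otimes> cmt G x a \<otimes> y) \<otimes>\<^bsub>Q\<^esub> q (cmt G y a)"
      using xc yc a by simp
    then show "q (cmt G (x \<otimes> y) a) = q (cmt G x a) \<otimes>\<^bsub>Q\<^esub> q (cmt G y a)"
      using conj[OF cU[OF x a] yc] by simp
  qed
  have s4: "\<And>t a b. t \<in> T \<Longrightarrow> a \<in> carrier G \<Longrightarrow> b \<in> carrier G \<Longrightarrow>
      q (cmt G t (a \<otimes> b)) = q (cmt G t a) \<otimes>\<^bsub>Q\<^esub> q (cmt G t b)"
  proof -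
    fix t a b assume t: "t \<in> T" and a: "a \<in> carrier G" and b: "b \<in> carrier G"
    have tc: "t \<in> carrier G" using t Tc by auto
    have "cmt G t (a \<otimes> b) = cmt G t b \<otimes> (inv b \<otimes> cmt G t a \<otimes> b)"
      using tc a b unfolding cmt_def by (simp add: gsimps)
    then have "q (cmt G t (a \<otimes> b)) = q (cmt G t b) \<otimes>\<^bsub>Q\<^esub> q (inv b \<otimes> cmt G t a \<otimes> b)"
      using tc a b by simp
    also have "\<dots> = q (cmt G t b) \<otimes>\<^bsub>Q\<^esub> q (cmt G t a)" using conj[OF cU[OF t a] b] by simp
    also have "\<dots> = q (cmt G t a) \<otimes>\<^bsub>Q\<^esub> q (cmt G t b)" using cen[OF cU[OF t b]] tc a by simp
    finally show "q (cmt G t (a \<otimes> b)) = q (cmt G t a) \<otimes>\<^bsub>Q\<^esub> q (cmt G t b)" .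
  qed
  have s5: "\<And>u a. u \<in> U \<Longrightarrow> a \<in> carrier G \<Longrightarrow> q (cmt G u a) = \<one>\<^bsub>Q\<^esub>"
    using qN comm_in unfolding N_def by blast
  define XX where "XX = {ts. \<forall>i<e. ts i \<in> T}"
  define Phi where "Phi = (\<lambda>ts. q (cprod G ts gs e))"
  define Im where "Im = Phi ` XX"
  have Pc: "\<And>ts j. ts \<in> XX \<Longrightarrow> j \<le> e \<Longrightarrow> cprod G ts gs j \<in> carrier G"
    by (rule cprod_closed) (use Tc gs in \<open>auto simp: XX_def\<close>)
  have PU: "\<And>ts j. ts \<in> XX \<Longrightarrow> j \<le> e \<Longrightarrow> cprod G ts gs j \<in> U"
    by (rule cprod_in[OF U]) (use cU gs in \<open>auto simp: XX_def\<close>)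
  have s8: "\<And>ts ss j. ts \<in> XX \<Longrightarrow> ss \<in> XX \<Longrightarrow> j \<le> e \<Longrightarrow>
     q (cprod G (\<lambda>i. ts i \<otimes> ss i) gs j) = q (cprod G ts gs j) \<otimes>\<^bsub>Q\<^esub> q (cprod G ss gs j)"
  proof -
    fix ts ss j assume ts: "ts \<in> XX" and ss: "ss \<in> XX"
    show "j \<le> e \<Longrightarrow> q (cprod G (\<lambda>i. ts i \<otimes> ss i) gs j) = q (cprod G ts gs j) \<otimes>\<^bsub>Q\<^esub> q (cprod G ss gs j)"
    proof (induction j)
      case 0 then show ?case by simp
    next
      case (Suc j)
      have j: "j < e" "j \<le> e" using Suc.prems by auto
      have tj: "ts j \<in> T" "ss j \<in> T" using ts ss j XX_def by auto
      have tjc: "ts j \<in> carrier G" "ss j \<in> carrier G" using tj Tc by auto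
      have gj: "gs j \<in> carrier G" using gs j by auto
      have Pp: "cprod G (\<lambda>i. ts i \<otimes> ss i) gs j \<in> carrier G"
        by (rule cprod_closed) (use ts ss Tc gs j in \<open>auto simp: XX_def subset_iff\<close>)
      have Pt: "cprod G ts gs j \<in> carrier G" "cprod G ss gs j \<in> carrier G"
        using Pc ts ss j by auto
      have PsU: "cprod G ss gs j \<in> U" using PU ss j by auto
      have "q (cprod G (\<lambda>i. ts i \<otimes> ss i) gs (Suc j))
          = q (cprod G (\<lambda>i. ts i \<otimes> ss i) gs j) \<otimes>\<^bsub>Q\<^esub> q (cmt G (ts j \<otimes> ss j) (gs j))"
        using tjc gj Pp by simp
      also have "\<dots> = (q (cprod G ts gs j) \<otimes>\<^bsub>Q\<^esub> q (cprod G ss gs j))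
             \<otimes>\<^bsub>Q\<^esub> (q (cmt G (ts j) (gs j)) \<otimes>\<^bsub>Q\<^esub> q (cmt G (ss j) (gs j)))"
        using Suc.IH j s3[OF tj gj] by simp
      also have "\<dots> = (q (cprod G ts gs j) \<otimes>\<^bsub>Q\<^esub> q (cmt G (ts j) (gs j)))
             \<otimes>\<^bsub>Q\<^esub> (q (cprod G ss gs j) \<otimes>\<^bsub>Q\<^esub> q (cmt G (ss j) (gs j)))"
        by (rule Q.swap_mid) (use Pt tjc gj cen[OF PsU, of "cmt G (ts j) (gs j)"] in simp_all)
      also have "\<dots> = q (cprod G ts gs (Suc j)) \<otimes>\<^bsub>Q\<^esub> q (cprod G ss gs (Suc j))"
        using Pt tjc gj by simp
      finally show ?case .
    qed
  qed
  have XXinv: "\<And>ts. ts \<in> XX \<Longrightarrow> (\<lambda>i. inv (ts i)) \<in> XX"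
    using T by (auto simp: XX_def subgroup.m_inv_closed)
  have XXmul: "\<And>ts ss. ts \<in> XX \<Longrightarrow> ss \<in> XX \<Longrightarrow> (\<lambda>i. ts i \<otimes> ss i) \<in> XX"
    using T by (auto simp: XX_def subgroup.m_closed)
  have XXone: "(\<lambda>_. \<one>) \<in> XX" using T by (auto simp: XX_def subgroup.one_closed)
  have Phic: "\<And>ts. ts \<in> XX \<Longrightarrow> Phi ts \<in> carrier Q" using Pc unfolding Phi_def by simp
  have Phi1: "Phi (\<lambda>_. \<one>) = \<one>\<^bsub>Q\<^esub>" unfolding Phi_def using gs by (simp add: cprod_one)
  have s9: "\<And>ts. ts \<in> XX \<Longrightarrow> Phi (\<lambda>i. inv (ts i)) = inv\<^bsub>Q\<^esub> (Phi ts)"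
  proof -
    fix ts assume ts: "ts \<in> XX"
    have "cprod G (\<lambda>i. inv (ts i) \<otimes> ts i) gs e = cprod G (\<lambda>_. \<one>) gs e"
      by (rule cprod_cong) (use ts Tc in \<open>auto simp: XX_def subset_iff\<close>)
    then have "Phi (\<lambda>i. inv (ts i) \<otimes> ts i) = \<one>\<^bsub>Q\<^esub>" using Phi1 unfolding Phi_def by simp
    then have "Phi (\<lambda>i. inv (ts i)) \<otimes>\<^bsub>Q\<^esub> Phi ts = \<one>\<^bsub>Q\<^esub>"
      using s8[OF XXinv[OF ts] ts order_refl] unfolding Phi_def by simp
    then show "Phi (\<lambda>i. inv (ts i)) = inv\<^bsub>Q\<^esub> (Phi ts)"
      using Q.inv_equality Phic ts XXinv by metis
  qed
  have ImM: "\<And>a b. a \<in> Im \<Longrightarrow> b \<in> Im \<Longrightarrow> a \<otimes>\<^bsub>Q\<^esub> b \<in> Im"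
  proof -
    fix a b assume "a \<in> Im" "b \<in> Im"
    then obtain ts ss where "ts \<in> XX" "ss \<in> XX" "a = Phi ts" "b = Phi ss" unfolding Im_def by auto
    then have "a \<otimes>\<^bsub>Q\<^esub> b = Phi (\<lambda>i. ts i \<otimes> ss i)" "(\<lambda>i. ts i \<otimes> ss i) \<in> XX"
      using s8[of ts ss e] XXmul unfolding Phi_def by auto
    then show "a \<otimes>\<^bsub>Q\<^esub> b \<in> Im" unfolding Im_def by auto
  qed
  have ImI: "\<And>a. a \<in> Im \<Longrightarrow> inv\<^bsub>Q\<^esub> a \<in> Im"
  proof -
    fix a assume "a \<in> Im"
    then obtain ts where "ts \<in> XX" "a = Phi ts" unfolding Im_def by auto
    then show "inv\<^bsub>Q\<^esub> a \<in> Im" using s9 XXinv unfolding Im_def by (metis image_eqI)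
  qed
  have Im1: "\<one>\<^bsub>Q\<^esub> \<in> Im" using Phi1 XXone unfolding Im_def by (metis image_eqI)
  have Imc: "Im \<subseteq> carrier Q" using Phic unfolding Im_def by auto
  have s10: "\<And>i t. i < e \<Longrightarrow> t \<in> T \<Longrightarrow> q (cmt G t (gs i)) \<in> Im"
  proof -
    fix i t assume i: "i < e" and t: "t \<in> T"
    have tc: "t \<in> carrier G" using t Tc by auto
    define dl where "dl = (\<lambda>j. if j = i then t else \<one>)"
    have dlX: "dl \<in> XX" using t T by (auto simp: dl_def XX_def subgroup.one_closed)
    have "j \<le> e \<Longrightarrow> q (cprod G dl gs j) = (if i < j then q (cmt G t (gs i)) else \<one>\<^bsub>Q\<^esub>)" for j
    proof (induction j)
      case 0 then show ?case by simp
    next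
      case (Suc j)
      have j: "j < e" "j \<le> e" using Suc.prems by auto
      have gj: "gs j \<in> carrier G" using gs j by auto
      have Pj: "cprod G dl gs j \<in> carrier G" using Pc[OF dlX j(2)] .
      have "q (cprod G dl gs (Suc j)) = q (cprod G dl gs j) \<otimes>\<^bsub>Q\<^esub> q (cmt G (dl j) (gs j))"
        using Pj gj tc by (simp add: dl_def)
      also have "\<dots> = (if i < Suc j then q (cmt G t (gs i)) else \<one>\<^bsub>Q\<^esub>)"
      proof (cases "j = i")
        case True
        then show ?thesis using Suc.IH j gj tc by (simp add: dl_def)
      next
        case False
        then have "cmt G (dl j) (gs j) = \<one>" using gj by (simp add: dl_def cmt_def)
        then show ?thesis using Suc.IH j gj tc False gs i by (auto simp: less_Suc_eq)
      qed
      finally show ?case .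
    qed
    from this[of e] i have "q (cmt G t (gs i)) = Phi dl" unfolding Phi_def by simp
    then show "q (cmt G t (gs i)) \<in> Im" using dlX unfolding Im_def by simp
  qed
  define M where "M = {a \<in> carrier G. \<forall>t\<in>T. q (cmt G t a) \<in> Im}"
  have Msub: "subgroup M G"
  proof (rule subgroupI)
    show "M \<subseteq> carrier G" unfolding M_def by auto
    have "\<one> \<in> M" unfolding M_def using Tc Im1 by (auto simp: cmt_def)
    then show "M \<noteq> {}" by auto
  next
    fix a assume a: "a \<in> M"
    have ac: "a \<in> carrier G" using a M_def by auto
    show "inv a \<in> M" unfolding M_def
    proof (intro CollectI conjI ballI)
      show "inv a \<in> carrier G" using ac by simp
      fix t assume t: "t \<in> T"
      have tc: "t \<in> carrier G" using t Tc by auto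
      have "q (cmt G t a) \<otimes>\<^bsub>Q\<^esub> q (cmt G t (inv a)) = q (cmt G t (a \<otimes> inv a))"
        using s4[OF t ac inv_closed[OF ac]] by simp
      also have "\<dots> = \<one>\<^bsub>Q\<^esub>" using ac tc by (simp add: cmt_def)
      finally have "q (cmt G t (inv a)) \<otimes>\<^bsub>Q\<^esub> q (cmt G t a) = \<one>\<^bsub>Q\<^esub>"
        using Q.inv_comm ac tc by simp
      then have "q (cmt G t (inv a)) = inv\<^bsub>Q\<^esub> (q (cmt G t a))"
        using Q.inv_equality ac tc by simp
      then show "q (cmt G t (inv a)) \<in> Im" using ImI a t M_def by auto
    qed
  next
    fix a b assume a: "a \<in> M" and b: "b \<in> M"
    have ac: "a \<in> carrier G" and bc: "b \<in> carrier G" using a b M_def by auto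
    show "a \<otimes> b \<in> M" unfolding M_def
    proof (intro CollectI conjI ballI)
      show "a \<otimes> b \<in> carrier G" using ac bc by simp
      fix t assume t: "t \<in> T"
      show "q (cmt G t (a \<otimes> b)) \<in> Im" using s4[OF t ac bc] ImM a b t M_def by auto
    qed
  qed
  have "K \<union> gs ` {..<e} \<subseteq> M"
  proof
    fix a assume "a \<in> K \<union> gs ` {..<e}"
    then show "a \<in> M"
    proof
      assume a: "a \<in> K"
      then show "a \<in> M" unfolding M_def using K TK qN Im1 unfolding N_def by auto
    next
      assume "a \<in> gs ` {..<e}"
      then obtain i where "i < e" "a = gs i" by auto
      then show "a \<in> M" unfolding M_def using s10 gs by auto
    qed
  qed
  then have Mall: "carrier G \<subseteq> M" using generate_subgroup_incl[OF _ Msub] gen by metis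
  define W where "W = {w \<in> carrier G. q w \<in> Im}"
  have Wsub: "subgroup W G"
  proof (rule subgroupI)
    show "W \<subseteq> carrier G" unfolding W_def by auto
    have "\<one> \<in> W" using Im1 unfolding W_def by simp
    then show "W \<noteq> {}" by auto
  next
    fix a assume "a \<in> W" then show "inv a \<in> W" using ImI unfolding W_def by auto
  next
    fix a b assume "a \<in> W" "b \<in> W" then show "a \<otimes> b \<in> W" using ImM unfolding W_def by auto
  qed
  have "comm_subgroup G T (carrier G) \<subseteq> W"
  proof (rule comm_subgroup_le[OF Wsub])
    fix t a assume "t \<in> T" "a \<in> carrier G"
    then show "cmt G t a \<in> W" using Mall Tc unfolding M_def W_def by auto
  qed
  then have sub: "(\<lambda>w. N #> w) ` comm_subgroup G T (carrier G) \<subseteq> Phi ` XX"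
    unfolding W_def Im_def q_def by auto
  define CT where "CT = (\<lambda>t. U #> t) ` T"
  define pi where "pi = (\<lambda>ts. restrict (\<lambda>i. U #> ts i) {..<e})"
  have piX: "pi ` XX \<subseteq> PiE {..<e} (\<lambda>_. CT)" unfolding pi_def CT_def XX_def by auto
  have finPi: "finite (PiE {..<e} (\<lambda>_. CT))" using fin unfolding CT_def by (simp add: finite_PiE)
  have cardPi: "card (PiE {..<e} (\<lambda>_. CT)) = card CT ^ e" by (simp add: card_PiE)
  have fact: "Phi a = Phi b" if a: "a \<in> XX" and b: "b \<in> XX" and ab: "pi a = pi b" for a b
  proof -
    have "j \<le> e \<Longrightarrow> q (cprod G a gs j) = q (cprod G b gs j)" for j
    proof (induction j)
      case 0 then show ?case by simp
    next
      case (Suc j)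
      have j: "j < e" "j \<le> e" using Suc.prems by auto
      have gj: "gs j \<in> carrier G" using gs j by auto
      have aj: "a j \<in> T" and bj: "b j \<in> T" using a b j XX_def by auto
      have ajc: "a j \<in> carrier G" and bjc: "b j \<in> carrier G" using aj bj Tc by auto
      have "U #> a j = U #> b j" using fun_cong[OF ab, of j] j unfolding pi_def by simp
      then have "b j \<in> U #> a j" using repr_independenceD[OF U bjc] by simp
      then obtain u where u: "u \<in> U" "b j = u \<otimes> a j" unfolding r_coset_def by auto
      have "q (cmt G (b j) (gs j)) = q (cmt G u (gs j)) \<otimes>\<^bsub>Q\<^esub> q (cmt G (a j) (gs j))"
        using s3[of u "a j" "gs j"] u UT aj gj by auto
      also have "\<dots> = q (cmt G (a j) (gs j))" using s5[OF u(1) gj] ajc gj by simp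
      finally have e1: "q (cmt G (b j) (gs j)) = q (cmt G (a j) (gs j))" .
      show ?case using Suc.IH j e1 Pc[OF a j(2)] Pc[OF b j(2)] ajc bjc gj by simp
    qed
    then show ?thesis unfolding Phi_def by simp
  qed
  have finpi: "finite (pi ` XX)" using finite_subset[OF piX finPi] .
  have cf: "finite (Phi ` XX) \<and> card (Phi ` XX) \<le> card (pi ` XX)"
    by (rule card_factor[OF finpi]) (use fact in blast)
  have "card (pi ` XX) \<le> card CT ^ e" using card_mono[OF finPi piX] cardPi by simp
  then show ?thesis using cf sub finite_subset card_mono unfolding N_def CT_def
    by (metis (no_types, lifting) le_trans)
qed

end


context group
begin

lemma ic_sub: "subgroup XX G \<Longrightarrow> subgroup (iter_comm G XX j (carrier G)) G"
proof (induction j)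
  case 0 then show ?case by simp
next
  case (Suc j)
  then have "iter_comm G XX j (carrier G) \<subseteq> carrier G" by (simp add: subgroup.subset)
  then show ?case by (simp add: comm_subgroup_subgroup)
qed

lemma ic_normal: "subgroup XX G \<Longrightarrow> 0 < j \<Longrightarrow> iter_comm G XX j (carrier G) \<lhd> G"
proof -
  assume a: "subgroup XX G" "0 < j"
  then obtain j' where j: "j = Suc j'" by (cases j) auto
  have "iter_comm G XX j' (carrier G) \<subseteq> carrier G" using ic_sub[OF a(1)] by (simp add: subgroup.subset)
  then show ?thesis using j by (simp add: comm_normal)
qed

lemma ic_mono: "XX \<subseteq> YY \<Longrightarrow> iter_comm G XX j (carrier G) \<subseteq> iter_comm G YY j (carrier G)"
proof (induction j)
  case 0 then show ?case by simp
next
  case (Suc j) then show ?case by (simp add: comm_mono)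
qed

lemma cen_lemma:
  assumes N: "N \<lhd> G" and u: "u \<in> carrier G" and x: "x \<in> carrier G" and c: "cmt G u x \<in> N"
  shows "(N #> u) \<otimes>\<^bsub>G Mod N\<^esub> (N #> x) = (N #> x) \<otimes>\<^bsub>G Mod N\<^esub> (N #> u)"
proof -
  interpret Q: group "G Mod N" by (rule normal.factorgroup_is_group[OF N])
  interpret qh: group_hom G "G Mod N" "\<lambda>x. N #> x"
    unfolding group_hom_def group_hom_axioms_def
    using normal.r_coset_hom_Mod[OF N] normal.factorgroup_is_group[OF N] is_group by blast
  have "N #> cmt G u x = \<one>\<^bsub>G Mod N\<^esub>" using normal.coset_is_one_iff[OF N] c u x by simp
  then have "cmt (G Mod N) (N #> u) (N #> x) = \<one>\<^bsub>G Mod N\<^esub>" using qh.hom_cmt u x by simp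
  then show ?thesis using Q.cmt_one_iff u x by simp
qed

end

theorem mainTheorem2:
  fixes G :: "('g, 'c) monoid_scheme" and F :: "('f, 'e) monoid_scheme"
    and p k d c n :: nat and B :: "'g set" and h :: "'f \<Rightarrow> 'g"
  assumes "Factorial_Ring.prime p" and "c \<ge> 1"
    and "group G" and "finite (carrier G)" and "order G = p ^ n"
    and "subgroup B G" and "B \<subseteq> center G"
    and "cyclic_group (G\<lparr>carrier := B\<rparr>)" and "card B = p ^ k"
    and "\<exists>gs. length gs = d \<and> set gs \<subseteq> carrier (G Mod B)
              \<and> generate (G Mod B) (set gs) = carrier (G Mod B)"
    and "free_group F"
    and "h \<in> hom F G" and "h ` carrier F = carrier G"
    and "R = kernel F G h"
    and "S = {x \<in> carrier F. h x \<in> B}"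
  shows "finite (carrier ((F\<lparr>carrier := iter_comm F S c (carrier F)\<rparr>) Mod (iter_comm F R c (carrier F))))
    \<and> order ((F\<lparr>carrier := iter_comm F S c (carrier F)\<rparr>) Mod (iter_comm F R c (carrier F)))
        \<le> p ^ (d * k * (d + 1) ^ (c - 1))"
proof -
  note Gg = assms(3) and finG = assms(4) and Bsub = assms(6) and Bcen = assms(7)
    and cyc = assms(8) and cardB = assms(9) and gens = assms(10) and hhom = assms(12)
    and hsurj = assms(13) and Rdef = assms(14) and Sdef = assms(15)
  have Fg: "group F" using assms(11) unfolding free_group_def free_group_on_def by blast
  interpret F: group F by (rule Fg)
  interpret G: group G by (rule Gg)
  interpret hh: group_hom F G h unfolding group_hom_def group_hom_axioms_def using Fg Gg hhom by blast
  define T where "T = (\<lambda>j. iter_comm F S j (carrier F))"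
  define U where "U = (\<lambda>j. iter_comm F R j (carrier F))"
  have cenB: "\<And>b g. b \<in> B \<Longrightarrow> g \<in> carrier G \<Longrightarrow> b \<otimes>\<^bsub>G\<^esub> g = g \<otimes>\<^bsub>G\<^esub> b"
    using Bcen unfolding center_def by blast
  have BcG: "B \<subseteq> carrier G" using Bsub subgroup.subset by blast
  have Rsub: "subgroup R F" unfolding Rdef by (rule hh.subgroup_kernel)
  have Rc: "R \<subseteq> carrier F" using Rsub subgroup.subset by blast
  have Ssub: "subgroup S F"
  proof (rule F.subgroupI)
    show "S \<subseteq> carrier F" unfolding Sdef by auto
    have "\<one>\<^bsub>F\<^esub> \<in> S" unfolding Sdef using subgroup.one_closed[OF Bsub] by simp
    then show "S \<noteq> {}" by auto
  next
    fix a assume "a \<in> S" then show "inv\<^bsub>F\<^esub> a \<in> S"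
      unfolding Sdef using subgroup.m_inv_closed[OF Bsub] by auto
  next
    fix a b assume "a \<in> S" "b \<in> S" then show "a \<otimes>\<^bsub>F\<^esub> b \<in> S"
      unfolding Sdef using subgroup.m_closed[OF Bsub] by auto
  qed
  have Sc: "S \<subseteq> carrier F" unfolding Sdef by auto
  have RS: "R \<subseteq> S" unfolding Rdef Sdef kernel_def using subgroup.one_closed[OF Bsub] by auto
  have Tsub: "\<And>j. subgroup (T j) F" unfolding T_def using Ssub by (rule F.ic_sub)
  have Usub: "\<And>j. subgroup (U j) F" unfolding U_def using Rsub by (rule F.ic_sub)
  have Tc: "\<And>j. T j \<subseteq> carrier F" using Tsub subgroup.subset by blast
  have Uc: "\<And>j. U j \<subseteq> carrier F" using Usub subgroup.subset by blast
  have Unorm: "\<And>j. 0 < j \<Longrightarrow> U j \<lhd> F" unfolding U_def using Rsub by (rule F.ic_normal)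
  have UT: "\<And>j. U j \<subseteq> T j" unfolding U_def T_def using RS by (rule F.ic_mono)
  have TSuc: "\<And>j. T (Suc j) = comm_subgroup F (T j) (carrier F)" unfolding T_def by simp
  have USuc: "\<And>j. U (Suc j) = comm_subgroup F (U j) (carrier F)" unfolding U_def by simp
  have SFR: "comm_subgroup F S (carrier F) \<subseteq> R"
  proof (rule F.comm_subgroup_le[OF Rsub])
    fix s f assume s: "s \<in> S" and f: "f \<in> carrier F"
    have sc: "s \<in> carrier F" using s Sc by auto
    have "h s \<otimes>\<^bsub>G\<^esub> h f = h f \<otimes>\<^bsub>G\<^esub> h s" using cenB s f unfolding Sdef by auto
    then have "cmt G (h s) (h f) = \<one>\<^bsub>G\<^esub>" using G.cmt_one_iff sc f by simp
    then show "cmt F s f \<in> R" unfolding Rdef kernel_def using hh.hom_cmt sc f by simp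
  qed
  have TU: "\<And>j. T (Suc j) \<subseteq> U j"
  proof -
    fix j show "T (Suc j) \<subseteq> U j"
    proof (induction j)
      case 0 then show ?case using SFR unfolding T_def U_def by simp
    next
      case (Suc j)
      then show ?case unfolding TSuc USuc by (intro F.comm_mono) auto
    qed
  qed
  have TU0: "\<And>j. comm_subgroup F (T j) (carrier F) \<subseteq> U j" using TU TSuc by simp
  have PP: "comm_subgroup F (T j) (U i) \<subseteq> U (i + j + 1)" for j i
  proof (induction j arbitrary: i)
    case 0
    have "comm_subgroup F (T 0) (U i) = comm_subgroup F (U i) (T 0)"
      using F.comm_sym Tc Uc by blast
    also have "\<dots> \<subseteq> comm_subgroup F (U i) (carrier F)" using Tc by (intro F.comm_mono) auto
    finally show ?case using USuc by simp
  next
    case (Suc j)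
    have N: "U (i + Suc j + 1) \<lhd> F" by (rule Unorm) simp
    have h1: "comm_subgroup F (comm_subgroup F (carrier F) (U i)) (T j) \<subseteq> U (i + Suc j + 1)"
    proof -
      have "comm_subgroup F (carrier F) (U i) = U (Suc i)" using F.comm_sym Uc USuc by simp
      then have "comm_subgroup F (comm_subgroup F (carrier F) (U i)) (T j) = comm_subgroup F (T j) (U (Suc i))"
        using F.comm_sym Uc Tc by simp
      also have "\<dots> \<subseteq> U (Suc i + j + 1)" by (rule Suc.IH)
      finally show ?thesis by simp
    qed
    have h2: "comm_subgroup F (comm_subgroup F (U i) (T j)) (carrier F) \<subseteq> U (i + Suc j + 1)"
    proof -
      have "comm_subgroup F (U i) (T j) \<subseteq> U (i + j + 1)" using F.comm_sym Uc Tc Suc.IH by simp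
      then have "comm_subgroup F (comm_subgroup F (U i) (T j)) (carrier F) \<subseteq> comm_subgroup F (U (i + j + 1)) (carrier F)"
        by (intro F.comm_mono) auto
      then show ?thesis using USuc by simp
    qed
    have "comm_subgroup F (comm_subgroup F (T j) (carrier F)) (U i) \<subseteq> U (i + Suc j + 1)"
      by (rule F.three_subgroup[OF Tsub F.subgroup_self Usub N h1 h2])
    then show ?case using TSuc by simp
  qed
  have gB: "group (G\<lparr>carrier := B\<rparr>)" by (rule G.subgroup_imp_group[OF Bsub])
  obtain b0 where b0: "b0 \<in> B" and Brange: "B = range (\<lambda>n::int. b0 [^]\<^bsub>G\<lparr>carrier := B\<rparr>\<^esub> n)"
    using group.cyclic_group[OF gB] cyc by auto
  have Bpow: "\<And>b. b \<in> B \<Longrightarrow> \<exists>n::int. b = b0 [^]\<^bsub>G\<^esub> n"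
    using Brange G.int_pow_consistent[OF Bsub b0] by auto
  obtain s0 where s0: "s0 \<in> carrier F" "h s0 = b0" using hsurj b0 BcG by (metis imageE subsetD)
  have s0S: "s0 \<in> S" unfolding Sdef using s0 b0 by simp
  have Sdec: "\<And>s. s \<in> S \<Longrightarrow> \<exists>n::int. \<exists>r\<in>R. s = s0 [^]\<^bsub>F\<^esub> n \<otimes>\<^bsub>F\<^esub> r"
  proof -
    fix s assume s: "s \<in> S"
    have sc: "s \<in> carrier F" using s Sc by auto
    obtain n :: int where n: "h s = b0 [^]\<^bsub>G\<^esub> n" using Bpow s unfolding Sdef by auto
    define r where "r = inv\<^bsub>F\<^esub> (s0 [^]\<^bsub>F\<^esub> n) \<otimes>\<^bsub>F\<^esub> s"
    have rc: "r \<in> carrier F" unfolding r_def using s0 sc by simp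
    have "h r = inv\<^bsub>G\<^esub> (b0 [^]\<^bsub>G\<^esub> n) \<otimes>\<^bsub>G\<^esub> (b0 [^]\<^bsub>G\<^esub> n)"
      unfolding r_def using s0 sc n hh.hom_int_pow by simp
    also have "\<dots> = \<one>\<^bsub>G\<^esub>" using b0 BcG by auto
    finally have "r \<in> R" unfolding Rdef kernel_def using rc by simp
    moreover have "s = s0 [^]\<^bsub>F\<^esub> n \<otimes>\<^bsub>F\<^esub> r" unfolding r_def using s0 sc by (simp add: F.canc1)
    ultimately show "\<exists>n::int. \<exists>r\<in>R. s = s0 [^]\<^bsub>F\<^esub> n \<otimes>\<^bsub>F\<^esub> r" by blast
  qed
  have SS: "\<And>t s. t \<in> S \<Longrightarrow> s \<in> S \<Longrightarrow> cmt F t s \<in> comm_subgroup F R (carrier F)"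
  proof -
    fix t s assume t: "t \<in> S" and s: "s \<in> S"
    define N where "N = comm_subgroup F R (carrier F)"
    have nN: "N \<lhd> F" unfolding N_def by (rule F.comm_normal[OF Rc])
    interpret Q: group "F Mod N" by (rule normal.factorgroup_is_group[OF nN])
    interpret qh: group_hom F "F Mod N" "\<lambda>x. N #>\<^bsub>F\<^esub> x"
      unfolding group_hom_def group_hom_axioms_def
      using normal.r_coset_hom_Mod[OF nN] normal.factorgroup_is_group[OF nN] Fg by blast
    have cen: "\<And>r x. r \<in> R \<Longrightarrow> x \<in> carrier F \<Longrightarrow>
       (N #>\<^bsub>F\<^esub> r) \<otimes>\<^bsub>F Mod N\<^esub> (N #>\<^bsub>F\<^esub> x) = (N #>\<^bsub>F\<^esub> x) \<otimes>\<^bsub>F Mod N\<^esub> (N #>\<^bsub>F\<^esub> r)"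
      using F.cen_lemma[OF nN] F.comm_in Rc unfolding N_def by blast
    obtain n r where n: "r \<in> R" "t = s0 [^]\<^bsub>F\<^esub> (n::int) \<otimes>\<^bsub>F\<^esub> r" using Sdec t by blast
    obtain m r' where m: "r' \<in> R" "s = s0 [^]\<^bsub>F\<^esub> (m::int) \<otimes>\<^bsub>F\<^esub> r'" using Sdec s by blast
    define A where "A = s0 [^]\<^bsub>F\<^esub> n"
    define A' where "A' = s0 [^]\<^bsub>F\<^esub> m"
    have Ac: "A \<in> carrier F" "A' \<in> carrier F" unfolding A_def A'_def using s0 by auto
    have rc: "r \<in> carrier F" "r' \<in> carrier F" using n m Rc by auto
    have AA: "A \<otimes>\<^bsub>F\<^esub> A' = A' \<otimes>\<^bsub>F\<^esub> A" unfolding A_def A'_def using s0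
      using F.int_pow_mult[OF s0(1), of n m] F.int_pow_mult[OF s0(1), of m n] by (simp add: add.commute)
    let ?q = "\<lambda>x. N #>\<^bsub>F\<^esub> x"
    have qAA: "?q A \<otimes>\<^bsub>F Mod N\<^esub> ?q A' = ?q A' \<otimes>\<^bsub>F Mod N\<^esub> ?q A"
      using AA Ac qh.hom_mult[symmetric] by metis
    have "?q t \<otimes>\<^bsub>F Mod N\<^esub> ?q s
        = (?q A \<otimes>\<^bsub>F Mod N\<^esub> ?q r) \<otimes>\<^bsub>F Mod N\<^esub> (?q A' \<otimes>\<^bsub>F Mod N\<^esub> ?q r')"
      using n m Ac rc unfolding A_def A'_def by simp
    also have "\<dots> = (?q A \<otimes>\<^bsub>F Mod N\<^esub> ?q A') \<otimes>\<^bsub>F Mod N\<^esub> (?q r \<otimes>\<^bsub>F Mod N\<^esub> ?q r')"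
      by (rule Q.swap_mid) (use Ac rc cen[OF n(1) Ac(2)] in simp_all)
    also have "\<dots> = (?q A' \<otimes>\<^bsub>F Mod N\<^esub> ?q A) \<otimes>\<^bsub>F Mod N\<^esub> (?q r' \<otimes>\<^bsub>F Mod N\<^esub> ?q r)"
      using qAA cen[OF n(1) rc(2)] by simp
    also have "\<dots> = (?q A' \<otimes>\<^bsub>F Mod N\<^esub> ?q r') \<otimes>\<^bsub>F Mod N\<^esub> (?q A \<otimes>\<^bsub>F Mod N\<^esub> ?q r)"
      by (rule Q.swap_mid) (use Ac rc cen[OF m(1) Ac(1)] in simp_all)
    also have "\<dots> = ?q s \<otimes>\<^bsub>F Mod N\<^esub> ?q t"
      using n m Ac rc unfolding A_def A'_def by simp
    finally have comm: "?q t \<otimes>\<^bsub>F Mod N\<^esub> ?q s = ?q s \<otimes>\<^bsub>F Mod N\<^esub> ?q t" .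
    have tc: "t \<in> carrier F" and sc: "s \<in> carrier F" using t s Sc by auto
    have "cmt (F Mod N) (?q t) (?q s) = \<one>\<^bsub>F Mod N\<^esub>" using Q.cmt_one_iff comm tc sc by simp
    then have "?q (cmt F t s) = \<one>\<^bsub>F Mod N\<^esub>" using qh.hom_cmt tc sc by simp
    then show "cmt F t s \<in> comm_subgroup F R (carrier F)"
      using normal.coset_is_one_iff[OF nN] tc sc unfolding N_def by simp
  qed
  have Bnorm: "B \<lhd> G"
    unfolding G.normal_inv_iff
  proof (intro conjI ballI Bsub)
    fix x b assume x: "x \<in> carrier G" and b: "b \<in> B"
    have bc: "b \<in> carrier G" using b BcG by auto
    have "x \<otimes>\<^bsub>G\<^esub> b \<otimes>\<^bsub>G\<^esub> inv\<^bsub>G\<^esub> x = b \<otimes>\<^bsub>G\<^esub> x \<otimes>\<^bsub>G\<^esub> inv\<^bsub>G\<^esub> x"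
      using cenB[OF b x] by simp
    also have "\<dots> = b" using x bc by (simp add: G.m_assoc)
    finally show "x \<otimes>\<^bsub>G\<^esub> b \<otimes>\<^bsub>G\<^esub> inv\<^bsub>G\<^esub> x \<in> B" using b by simp
  qed
  interpret GB: group "G Mod B" by (rule normal.factorgroup_is_group[OF Bnorm])
  define phi where "phi = (\<lambda>x. B #>\<^bsub>G\<^esub> h x)"
  have phihom: "phi \<in> hom F (G Mod B)"
    unfolding phi_def using hom_compose[OF hhom normal.r_coset_hom_Mod[OF Bnorm]] by (simp add: comp_def)
  interpret ph: group_hom F "G Mod B" phi
    unfolding group_hom_def group_hom_axioms_def using Fg GB.is_group phihom by blast
  obtain gl where gl: "length gl = d" "set gl \<subseteq> carrier (G Mod B)"
    "generate (G Mod B) (set gl) = carrier (G Mod B)" using gens by blast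
  have cGB: "carrier (G Mod B) = phi ` carrier F"
    unfolding phi_def carrier_FactGroup using hsurj by (metis image_image)
  define lf where "lf = (\<lambda>i. SOME f. f \<in> carrier F \<and> phi f = gl ! i)"
  have lf: "\<And>i. i < d \<Longrightarrow> lf i \<in> carrier F \<and> phi (lf i) = gl ! i"
  proof -
    fix i assume "i < d"
    then have "gl ! i \<in> carrier (G Mod B)" using gl by auto
    then have "\<exists>f. f \<in> carrier F \<and> phi f = gl ! i" using cGB by auto
    then show "lf i \<in> carrier F \<and> phi (lf i) = gl ! i" unfolding lf_def by (rule someI_ex)
  qed
  have genS: "generate F (S \<union> lf ` {..<d}) = carrier F"
  proof -
    define W where "W = generate F (S \<union> lf ` {..<d})"
    have Wc: "W \<subseteq> carrier F" unfolding W_def using Sc lf by (intro F.generate_incl) auto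
    have Wsub: "subgroup W F" unfolding W_def using Sc lf by (intro F.generate_is_subgroup) auto
    have "set gl \<subseteq> phi ` W"
    proof
      fix y assume "y \<in> set gl"
      then obtain i where i: "i < d" "y = gl ! i" using gl(1) by (auto simp: in_set_conv_nth)
      have "lf i \<in> W" unfolding W_def using i by (intro generate.incl) auto
      then show "y \<in> phi ` W" using lf[OF i(1)] i by auto
    qed
    then have all: "carrier (G Mod B) \<subseteq> phi ` W"
      using GB.generate_subgroup_incl[OF _ ph.subgroup_img_is_subgroup[OF Wsub]] gl(3) by metis
    have "carrier F \<subseteq> W"
    proof
      fix x assume x: "x \<in> carrier F"
      then have "phi x \<in> phi ` W" using all by auto
      then obtain w where w: "w \<in> W" "phi x = phi w" by auto
      have wc: "w \<in> carrier F" using w Wc by auto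
      have "phi (x \<otimes>\<^bsub>F\<^esub> inv\<^bsub>F\<^esub> w) = phi x \<otimes>\<^bsub>G Mod B\<^esub> phi (inv\<^bsub>F\<^esub> w)"
        by (rule ph.hom_mult) (use x wc in auto)
      also have "\<dots> = phi w \<otimes>\<^bsub>G Mod B\<^esub> inv\<^bsub>G Mod B\<^esub> (phi w)"
        using w(2) wc ph.hom_inv by simp
      also have "\<dots> = \<one>\<^bsub>G Mod B\<^esub>" by (rule GB.r_inv[OF ph.hom_closed[OF wc]])
      finally have "phi (x \<otimes>\<^bsub>F\<^esub> inv\<^bsub>F\<^esub> w) = \<one>\<^bsub>G Mod B\<^esub>" .
      then have "B #>\<^bsub>G\<^esub> h (x \<otimes>\<^bsub>F\<^esub> inv\<^bsub>F\<^esub> w) = B" unfolding phi_def by simp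
      then have "h (x \<otimes>\<^bsub>F\<^esub> inv\<^bsub>F\<^esub> w) \<in> B"
        using normal.coset_is_one_iff[OF Bnorm] x wc by simp
      then have "x \<otimes>\<^bsub>F\<^esub> inv\<^bsub>F\<^esub> w \<in> W" unfolding W_def Sdef using x wc
        by (intro generate.incl) auto
      then have "(x \<otimes>\<^bsub>F\<^esub> inv\<^bsub>F\<^esub> w) \<otimes>\<^bsub>F\<^esub> w \<in> W" using w(1) subgroup.m_closed[OF Wsub] by blast
      then show "x \<in> W" using x wc by (simp add: F.m_assoc)
    qed
    then show ?thesis using Wc unfolding W_def by blast
  qed
  have SR: "finite ((\<lambda>s. R #>\<^bsub>F\<^esub> s) ` S) \<and> card ((\<lambda>s. R #>\<^bsub>F\<^esub> s) ` S) \<le> p ^ k"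
  proof -
    have finB: "finite B" using finG BcG finite_subset by blast
    have hS: "h ` S \<subseteq> B" unfolding Sdef by auto
    have cf: "finite ((\<lambda>s. R #>\<^bsub>F\<^esub> s) ` S) \<and> card ((\<lambda>s. R #>\<^bsub>F\<^esub> s) ` S) \<le> card (h ` S)"
    proof (rule card_factor)
      show "finite (h ` S)" using finite_subset[OF hS finB] .
      fix a b assume a: "a \<in> S" and b: "b \<in> S" and ab: "h a = h b"
      have ac: "a \<in> carrier F" and bc: "b \<in> carrier F" using a b Sc by auto
      have "h (a \<otimes>\<^bsub>F\<^esub> inv\<^bsub>F\<^esub> b) = \<one>\<^bsub>G\<^esub>" using ac bc ab by simp
      then have "a \<otimes>\<^bsub>F\<^esub> inv\<^bsub>F\<^esub> b \<in> R" unfolding Rdef kernel_def using ac bc by simp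
      then have "a \<in> R #>\<^bsub>F\<^esub> b" using subgroup.rcos_module_rev[OF Rsub Fg bc ac] by simp
      then show "R #>\<^bsub>F\<^esub> a = R #>\<^bsub>F\<^esub> b" using F.repr_independence[OF _ bc Rsub] by simp
    qed
    have "card (h ` S) \<le> p ^ k" using card_mono[OF finB hS] cardB by simp
    then show ?thesis using cf by simp
  qed
  have claim: "finite ((\<lambda>x. U (Suc j) #>\<^bsub>F\<^esub> x) ` T (Suc j))
      \<and> card ((\<lambda>x. U (Suc j) #>\<^bsub>F\<^esub> x) ` T (Suc j)) \<le> p ^ (d * k * (d + 1) ^ j)" for j
  proof (induction j)
    case 0
    have "finite ((\<lambda>w. comm_subgroup F R (carrier F) #>\<^bsub>F\<^esub> w) ` comm_subgroup F S (carrier F))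
      \<and> card ((\<lambda>w. comm_subgroup F R (carrier F) #>\<^bsub>F\<^esub> w) ` comm_subgroup F S (carrier F))
         \<le> card ((\<lambda>t. R #>\<^bsub>F\<^esub> t) ` S) ^ d"
      by (rule F.count_lemma[where gs=lf and e=d, OF Ssub Rsub RS SFR Sc SS]) (use lf genS SR in auto)
    moreover have "card ((\<lambda>t. R #>\<^bsub>F\<^esub> t) ` S) ^ d \<le> (p ^ k) ^ d" using SR by (simp add: power_mono)
    ultimately show ?case unfolding T_def U_def by (simp add: power_mult[symmetric] mult.commute)
  next
    case (Suc j)
    define gs' where "gs' = lf(d := s0)"
    have gs'c: "\<And>i. i < Suc d \<Longrightarrow> gs' i \<in> carrier F" unfolding gs'_def using lf s0 by auto
    have gen': "generate F (R \<union> gs' ` {..<Suc d}) = carrier F"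
    proof -
      define W where "W = generate F (R \<union> gs' ` {..<Suc d})"
      have Wc: "W \<subseteq> carrier F" unfolding W_def using Rc gs'c by (intro F.generate_incl) auto
      have Wsub: "subgroup W F" unfolding W_def using Rc gs'c by (intro F.generate_is_subgroup) auto
      have s0W: "s0 \<in> W" unfolding W_def gs'_def by (intro generate.incl) auto
      have "S \<union> lf ` {..<d} \<subseteq> W"
      proof
        fix x assume "x \<in> S \<union> lf ` {..<d}"
        then show "x \<in> W"
        proof
          assume "x \<in> S"
          then obtain n r where nr: "r \<in> R" "x = s0 [^]\<^bsub>F\<^esub> (n::int) \<otimes>\<^bsub>F\<^esub> r" using Sdec by blast
          have "r \<in> W" unfolding W_def using nr by (intro generate.incl) auto
          moreover have "s0 [^]\<^bsub>F\<^esub> n \<in> W" using F.subgroup_int_pow_closed[OF Wsub s0W] .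
          ultimately show "x \<in> W" using nr subgroup.m_closed[OF Wsub] by simp
        next
          assume "x \<in> lf ` {..<d}"
          then obtain i where i: "i < d" "x = lf i" by auto
          then have "x = gs' i" unfolding gs'_def by simp
          then show "x \<in> W" unfolding W_def using i by (intro generate.incl) auto
        qed
      qed
      then have "carrier F \<subseteq> W" using F.generate_subgroup_incl[OF _ Wsub] genS by metis
      then show ?thesis using Wc unfolding W_def by blast
    qed
    have TK: "\<And>t r. t \<in> T (Suc j) \<Longrightarrow> r \<in> R \<Longrightarrow> cmt F t r \<in> comm_subgroup F (U (Suc j)) (carrier F)"
    proof -
      fix t r assume "t \<in> T (Suc j)" "r \<in> R"
      then have "cmt F t r \<in> comm_subgroup F (T (Suc j)) (U 0)" unfolding U_def by (simp add: F.comm_in)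
      then have "cmt F t r \<in> U (0 + Suc j + 1)" using PP by blast
      then show "cmt F t r \<in> comm_subgroup F (U (Suc j)) (carrier F)" using USuc by simp
    qed
    have cnt: "finite ((\<lambda>w. comm_subgroup F (U (Suc j)) (carrier F) #>\<^bsub>F\<^esub> w) ` comm_subgroup F (T (Suc j)) (carrier F))
      \<and> card ((\<lambda>w. comm_subgroup F (U (Suc j)) (carrier F) #>\<^bsub>F\<^esub> w) ` comm_subgroup F (T (Suc j)) (carrier F))
         \<le> card ((\<lambda>t. U (Suc j) #>\<^bsub>F\<^esub> t) ` T (Suc j)) ^ Suc d"
      by (rule F.count_lemma[OF Tsub Usub UT TU0 Rc TK gs'c gen']) (use Suc.IH in auto)
    have "card ((\<lambda>t. U (Suc j) #>\<^bsub>F\<^esub> t) ` T (Suc j)) ^ Suc d \<le> (p ^ (d * k * (d + 1) ^ j)) ^ Suc d"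
      using Suc.IH power_mono[of _ _ "Suc d"] by blast
    also have "\<dots> = p ^ (d * k * (d + 1) ^ Suc j)"
    proof -
      have ex: "d * k * (d + 1) ^ j * Suc d = d * k * (d + 1) ^ Suc j" by (simp add: algebra_simps)
      show ?thesis by (simp only: power_mult[symmetric] ex)
    qed
    finally show ?case using cnt TSuc USuc by simp
  qed
  have c: "c = Suc (c - 1)" using assms(2) by simp
  have carr: "carrier ((F\<lparr>carrier := iter_comm F S c (carrier F)\<rparr>) Mod (iter_comm F R c (carrier F)))
      = (\<lambda>x. U c #>\<^bsub>F\<^esub> x) ` T c"
    unfolding FactGroup_def RCOSETS_def r_coset_def T_def U_def by auto
  show ?thesis unfolding order_def carr using claim[of "c - 1"] c by simp
qed

end
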